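(* Let $N\ge2$ and for $u=(u_1,\dots,u_N)$, $v=(v_1,\dots,v_N)$ define the $N\times N$ matrices (indices mod $N$) $U(u,\lambda)=\lambda\sum_{k=1}^N E_{k+1,k}+\sum_{k=1}^N u_kE_{kk}$, $V(v,\lambda)=I+\lambda^{-1}\sum_{k=1}^N v_kE_{k,k+1}$. Then the set of pairs $(U(u,\lambda),V(v,\lambda))$ is a Poisson submanifold of $\mathbf{g}=g\oplus g$ equipped with PB$(\mathbf{A},\mathbf{B},\mathbf{C},\mathbf{D})$, where the operators have components $\mathbf{A}=\begin{pmatrix}A&-B\\ C&A\end{pmatrix}$, $\mathbf{B}=\begin{pmatrix}B&B\\ B&-C\end{pmatrix}$, $\mathbf{C}=\begin{pmatrix}C&C\\ C&-B\end{pmatrix}$, $\mathbf{D}=\begin{pmatrix}D&-C\\ B&D\end{pmatrix}$.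
   Context: $E_{ij}$ are matrix units. $g$ is the twisted loop algebra of formal Laurent series $u(\lambda)=\sum_{p\le p_0}\sum_{i-j\equiv p\ (\mathrm{mod}\ N)}\lambda^pu^{(p)}_{ij}E_{ij}$ with form $\langle u,v\rangle=\mathrm{tr}(u(\lambda)v(\lambda))_0$ (coefficient of $\lambda^0$). $g_k$: elements containing only $\lambda^k$; $g_\pm=\bigoplus_{\pm k>0}g_k$; $P_+,P_-,P_0$ projections onto $g_+,g_-,g_0$; $R_0=P_+-P_-$; $\Pi(E_{jj})=\sum_k\pi_{jk}E_{kk}$ with $\pi_{jk}=1$ ($j>k$), $-1$ ($j<k$), $0$ ($j=k$), extended as $\Pi\circ P_0$; $A=\frac12(R_0+\Pi)$, $D=\frac12(R_0-\Pi)$, $B=\frac12(P_0-\Pi)$, $C=\frac12(P_0+\Pi)$. $\mathbf{g}=g\oplus g$ with componentwise multiplication and form $\langle\langle\mathbf{u},\mathbf{v}\rangle\rangle=\sum_k\langle u_k,v_k\rangle$; a matrix of operators $(X_{ij})$ acts by $(\mathbf{X}(\mathbf{u}))_i=\sum_jX_{ij}(u_j)$. For smooth $\Phi$ on $\mathbf{g}$, $\nabla_j\Phi$ is the $j$-th gradient component, $d_j\Phi=u_j\nabla_j\Phi$, $d'_j\Phi=\nabla_j\Phi\,u_j$, and PB$(\mathbf{A},\mathbf{B},\mathbf{C},\mathbf{D})$ is $\{\Phi,\Psi\}=\sum_{i,j}\big(\langle A_{ij}(d'_j\Phi),d'_i\Psi\rangle-\langle D_{ij}(d_j\Phi),d_i\Psi\rangle+\langle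 B_{ij}(d_j\Phi),d'_i\Psi\rangle-\langle C_{ij}(d'_j\Phi),d_i\Psi\rangle\big)$. A Poisson submanifold is one to which all Hamiltonian vector fields of the bracket are tangent. *)

theory Defs
  imports Complex_Main
begin

text \<open>An element of the twisted loop algebra g (N x N matrices, indices 0..N-1,
  real coefficients) is represented by its coefficient function:
  u p i j is the coefficient of lambda^p in the (i,j) entry.\<close>
type_synonym loop = "int \<Rightarrow> nat \<Rightarrow> nat \<Rightarrow> real"

definition in_g :: "nat \<Rightarrow> loop \<Rightarrow> bool" where
  "in_g N u \<longleftrightarrow>
     (\<forall>p i j. (N \<le> i \<or> N \<le> j) \<longrightarrow> u p i j = 0) \<and>
     (\<exists>p0. \<forall>p i j. p0 < p \<longrightarrow> u p i j = 0) \<and>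
     (\<forall>p i j. u p i j \<noteq> 0 \<longrightarrow> (int i - int j) mod int N = p mod int N)"

text \<open>Product of formal Laurent series (the sum over p is finite for elements of g).\<close>
definition lmul :: "nat \<Rightarrow> loop \<Rightarrow> loop \<Rightarrow> loop" where
  "lmul N u v = (\<lambda>r i j.
     \<Sum>p \<in> {p. u p \<noteq> (\<lambda>_ _. 0) \<and> v (r - p) \<noteq> (\<lambda>_ _. 0)}.
        \<Sum>k<N. u p i k * v (r - p) k j)"

definition lpair :: "nat \<Rightarrow> loop \<Rightarrow> loop \<Rightarrow> real" where
  "lpair N u v = (\<Sum>i<N. lmul N u v 0 i i)"

definition ladd :: "loop \<Rightarrow> loop \<Rightarrow> loop" where
  "ladd u v = (\<lambda>p i j. u p i j + v p i j)"
definition lsub :: "loop \<Rightarrow> loop \<Rightarrow> loop" where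
  "lsub u v = (\<lambda>p i j. u p i j - v p i j)"
definition lneg :: "loop \<Rightarrow> loop" where
  "lneg u = (\<lambda>p i j. - u p i j)"
definition lhalf :: "loop \<Rightarrow> loop" where
  "lhalf u = (\<lambda>p i j. u p i j / 2)"

definition Pplus :: "loop \<Rightarrow> loop" where
  "Pplus u = (\<lambda>p. if 0 < p then u p else (\<lambda>_ _. 0))"
definition Pminus :: "loop \<Rightarrow> loop" where
  "Pminus u = (\<lambda>p. if p < 0 then u p else (\<lambda>_ _. 0))"
definition Pzero :: "loop \<Rightarrow> loop" where
  "Pzero u = (\<lambda>p. if p = 0 then u p else (\<lambda>_ _. 0))"

definition R0 :: "loop \<Rightarrow> loop" where
  "R0 u = lsub (Pplus u) (Pminus u)"

definition piI :: "nat \<Rightarrow> nat \<Rightarrow> real" where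
  "piI j k = (if k < j then 1 else if j < k then -1 else 0)"

text \<open>Pi(E_jj) = sum_k pi_jk E_kk, extended as Pi o P_0 (g_0 = diagonal matrices).\<close>
definition PiOp :: "nat \<Rightarrow> loop \<Rightarrow> loop" where
  "PiOp N u = (\<lambda>p i j. if p = 0 \<and> i = j \<and> i < N
                        then (\<Sum>l<N. piI l i * u 0 l l) else 0)"

definition Aop :: "nat \<Rightarrow> loop \<Rightarrow> loop" where
  "Aop N u = lhalf (ladd (R0 u) (PiOp N u))"
definition Dop :: "nat \<Rightarrow> loop \<Rightarrow> loop" where
  "Dop N u = lhalf (lsub (R0 u) (PiOp N u))"
definition Bop :: "nat \<Rightarrow> loop \<Rightarrow> loop" where
  "Bop N u = lhalf (lsub (Pzero u) (PiOp N u))"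
definition Cop :: "nat \<Rightarrow> loop \<Rightarrow> loop" where
  "Cop N u = lhalf (ladd (Pzero u) (PiOp N u))"

definition cmp :: "loop \<times> loop \<Rightarrow> nat \<Rightarrow> loop" where
  "cmp x k = (if k = 0 then fst x else snd x)"

definition in_gg :: "nat \<Rightarrow> loop \<times> loop \<Rightarrow> bool" where
  "in_gg N x \<longleftrightarrow> in_g N (fst x) \<and> in_g N (snd x)"

definition ggpair :: "nat \<Rightarrow> loop \<times> loop \<Rightarrow> loop \<times> loop \<Rightarrow> real" where
  "ggpair N x y = (\<Sum>k<2. lpair N (cmp x k) (cmp y k))"

type_synonym opmat = "nat \<Rightarrow> nat \<Rightarrow> loop \<Rightarrow> loop"

definition mk2 :: "(loop \<Rightarrow> loop) \<Rightarrow> (loop \<Rightarrow> loop) \<Rightarrow> (loop \<Rightarrow> loop) \<Rightarrow> (loop \<Rightarrow> loop) \<Rightarrow> opmat" where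
  "mk2 a b c d = (\<lambda>i j. if i = 0 then (if j = 0 then a else b) else (if j = 0 then c else d))"

definition boldA :: "nat \<Rightarrow> opmat" where
  "boldA N = mk2 (Aop N) (\<lambda>u. lneg (Bop N u)) (Cop N) (Aop N)"
definition boldB :: "nat \<Rightarrow> opmat" where
  "boldB N = mk2 (Bop N) (Bop N) (Bop N) (\<lambda>u. lneg (Cop N u))"
definition boldC :: "nat \<Rightarrow> opmat" where
  "boldC N = mk2 (Cop N) (Cop N) (Cop N) (\<lambda>u. lneg (Bop N u))"
definition boldD :: "nat \<Rightarrow> opmat" where
  "boldD N = mk2 (Dop N) (\<lambda>u. lneg (Cop N u)) (Bop N) (Dop N)"

text \<open>The bracket PB(A,B,C,D) at the point L, for functions Phi, Psi whose gradients
  at L are X = grad Phi(L) and Y = grad Psi(L):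
  d_j Phi = L_j X_j, d'_j Phi = X_j L_j.\<close>
definition PB :: "nat \<Rightarrow> opmat \<Rightarrow> opmat \<Rightarrow> opmat \<Rightarrow> opmat \<Rightarrow>
                  loop \<times> loop \<Rightarrow> loop \<times> loop \<Rightarrow> loop \<times> loop \<Rightarrow> real" where
  "PB N Ao Bo Co Do L X Y =
    (\<Sum>i<2. \<Sum>j<2.
        lpair N (Ao i j (lmul N (cmp X j) (cmp L j))) (lmul N (cmp Y i) (cmp L i))
      - lpair N (Do i j (lmul N (cmp L j) (cmp X j))) (lmul N (cmp L i) (cmp Y i))
      + lpair N (Bo i j (lmul N (cmp L j) (cmp X j))) (lmul N (cmp Y i) (cmp L i))
      - lpair N (Co i j (lmul N (cmp X j) (cmp L j))) (lmul N (cmp L i) (cmp Y i)))"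

text \<open>T is the value at L of the Hamiltonian vector field of a function Phi with
  gradient X at L:  d Psi(L)[T] = {Phi, Psi}(L) for every Psi (gradient Y).\<close>
definition is_hamvf :: "nat \<Rightarrow> opmat \<Rightarrow> opmat \<Rightarrow> opmat \<Rightarrow> opmat \<Rightarrow>
                  loop \<times> loop \<Rightarrow> loop \<times> loop \<Rightarrow> loop \<times> loop \<Rightarrow> bool" where
  "is_hamvf N Ao Bo Co Do L X T \<longleftrightarrow>
     in_gg N T \<and> (\<forall>Y. in_gg N Y \<longrightarrow> PB N Ao Bo Co Do L X Y = ggpair N T Y)"

text \<open>Tangent vectors to S at L: velocities at 0 of curves in S through L
  (coefficientwise differentiable).\<close>
definition tangent_vec :: "(loop \<times> loop) set \<Rightarrow> loop \<times> loop \<Rightarrow> loop \<times> loop \<Rightarrow> bool" where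
  "tangent_vec S L T \<longleftrightarrow>
     (\<exists>c e. 0 < e \<and> c 0 = L \<and> (\<forall>t. \<bar>t\<bar> < e \<longrightarrow> c t \<in> S) \<and>
        (\<forall>k p i j. ((\<lambda>t. cmp (c t) k p i j) has_real_derivative cmp T k p i j) (at 0)))"

definition poisson_submanifold :: "nat \<Rightarrow> opmat \<Rightarrow> opmat \<Rightarrow> opmat \<Rightarrow> opmat \<Rightarrow>
                  (loop \<times> loop) set \<Rightarrow> bool" where
  "poisson_submanifold N Ao Bo Co Do S \<longleftrightarrow>
     S \<subseteq> {x. in_gg N x} \<and>
     (\<forall>L\<in>S. \<forall>X. in_gg N X \<longrightarrow>
        (\<exists>T. is_hamvf N Ao Bo Co Do L X T \<and> tangent_vec S L T))"

definition Umat :: "nat \<Rightarrow> (nat \<Rightarrow> real) \<Rightarrow> loop" where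
  "Umat N u = (\<lambda>p i j.
     (if p = 1 \<and> i < N \<and> j < N \<and> i = (j + 1) mod N then 1 else 0)
   + (if p = 0 \<and> i = j \<and> i < N then u i else 0))"

definition Vmat :: "nat \<Rightarrow> (nat \<Rightarrow> real) \<Rightarrow> loop" where
  "Vmat N v = (\<lambda>p i j.
     (if p = 0 \<and> i = j \<and> i < N then 1 else 0)
   + (if p = -1 \<and> i < N \<and> j < N \<and> j = (i + 1) mod N then v i else 0))"

definition UV_set :: "nat \<Rightarrow> (loop \<times> loop) set" where
  "UV_set N = {(Umat N u, Vmat N v) | u v. True}"

end

theory Submission
  imports Defs
begin

definition sc :: "nat \<Rightarrow> nat \<Rightarrow> nat" where "sc N i = (if i + 1 = N then 0 else i + 1)"
definition pr :: "nat \<Rightarrow> nat \<Rightarrow> nat" where "pr N i = (if i = 0 then N - 1 else i - 1)"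

lemma sc_mod: "i < N \<Longrightarrow> (i + 1) mod N = sc N i"
  by (auto simp: sc_def)
lemma Suc_mod_sc[simp]: "i < N \<Longrightarrow> Suc i mod N = sc N i"
  using sc_mod by simp
lemma sc_lt[simp]: "i < N \<Longrightarrow> sc N i < N" by (auto simp: sc_def)
lemma pr_lt[simp]: "i < N \<Longrightarrow> pr N i < N" by (auto simp: pr_def)
lemma sc_pr[simp]: "i < N \<Longrightarrow> sc N (pr N i) = i" by (auto simp: sc_def pr_def)
lemma pr_sc[simp]: "i < N \<Longrightarrow> pr N (sc N i) = i" by (auto simp: sc_def pr_def)
lemma sc_eq_iff: "i < N \<Longrightarrow> k < N \<Longrightarrow> (i = sc N k) = (k = pr N i)"
  by (auto simp: sc_def pr_def)

lemma lmul_superset: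
  assumes "finite A" "{p. u p \<noteq> (\<lambda>_ _. 0) \<and> v (r - p) \<noteq> (\<lambda>_ _. 0)} \<subseteq> A"
  shows "lmul N u v r i j = (\<Sum>p\<in>A. \<Sum>k<N. u p i k * v (r - p) k j)"
  unfolding lmul_def
proof (rule sum.mono_neutral_left[OF assms(1) assms(2)])
  show "\<forall>p\<in>A - {p. u p \<noteq> (\<lambda>_ _. 0) \<and> v (r - p) \<noteq> (\<lambda>_ _. 0)}. (\<Sum>k<N. u p i k * v (r - p) k j) = 0"
    by auto
qed

lemma Umat_supp: "p \<notin> {0,1} \<Longrightarrow> Umat N u p = (\<lambda>_ _. 0)"
  by (auto simp: Umat_def fun_eq_iff)
lemma Vmat_supp: "p \<notin> {0,-1} \<Longrightarrow> Vmat N u p = (\<lambda>_ _. 0)"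
  by (auto simp: Vmat_def fun_eq_iff)

lemma lmul_sparseL:
  assumes "finite F" "\<And>p. p \<notin> F \<Longrightarrow> u p = (\<lambda>_ _. 0)"
  shows "lmul N u v r i j = (\<Sum>p\<in>F. \<Sum>k<N. u p i k * v (r - p) k j)"
  by (rule lmul_superset) (use assms in auto)

lemma lmul_sparseR:
  assumes "finite F" "\<And>p. p \<notin> F \<Longrightarrow> v p = (\<lambda>_ _. 0)"
  shows "lmul N u v r i j = (\<Sum>q\<in>F. \<Sum>k<N. u (r - q) i k * v q k j)"
proof -
  have "lmul N u v r i j = (\<Sum>p\<in>(\<lambda>q. r - q) ` F. \<Sum>k<N. u p i k * v (r - p) k j)"
  proof (rule lmul_superset)
    show "finite ((\<lambda>q. r - q) ` F)" using assms(1) by simp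
    show "{p. u p \<noteq> (\<lambda>_ _. 0) \<and> v (r - p) \<noteq> (\<lambda>_ _. 0)} \<subseteq> (\<lambda>q. r - q) ` F"
    proof
      fix p assume "p \<in> {p. u p \<noteq> (\<lambda>_ _. 0) \<and> v (r - p) \<noteq> (\<lambda>_ _. 0)}"
      then have "r - p \<in> F" using assms(2) by blast
      moreover have "p = r - (r - p)" by simp
      ultimately show "p \<in> (\<lambda>q. r - q) ` F" by blast
    qed
  qed
  also have "\<dots> = (\<Sum>q\<in>F. \<Sum>k<N. u (r - q) i k * v q k j)"
    by (subst sum.reindex) (auto simp: inj_on_def)
  finally show ?thesis .
qed

lemma sum_pr: "i < N \<Longrightarrow> (\<Sum>k<N. (if i < N \<and> k < N \<and> i = (k + 1) mod N then 1 else 0) * f k) = (f (pr N i) :: real)"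
proof -
  assume i: "i < N"
  have "(\<Sum>k<N. (if i < N \<and> k < N \<and> i = (k + 1) mod N then 1 else 0) * f k) = (\<Sum>k<N. if k = pr N i then f k else 0)"
  proof (rule sum.cong)
    fix k assume "k \<in> {..<N}"
    then have k: "k < N" by simp
    have "(i = (k + 1) mod N) = (k = pr N i)" using sc_mod[OF k] sc_eq_iff[OF i k] by simp
    then show "(if i < N \<and> k < N \<and> i = (k + 1) mod N then 1 else 0) * f k = (if k = pr N i then f k else 0)"
      using i k by simp
  qed simp
  also have "\<dots> = f (pr N i)" using i by simp
  finally show ?thesis .
qed

lemma sum_sc: "i < N \<Longrightarrow> (\<Sum>k<N. (if i < N \<and> k < N \<and> k = (i + 1) mod N then c else 0) * f k) = (c * f (sc N i) :: real)"
proof -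
  assume i: "i < N"
  have "(\<Sum>k<N. (if i < N \<and> k < N \<and> k = (i + 1) mod N then c else 0) * f k) = (\<Sum>k<N. if k = sc N i then c * f k else 0)"
  proof (rule sum.cong)
    fix k assume "k \<in> {..<N}"
    then have k: "k < N" by simp
    have "(k = (i + 1) mod N) = (k = sc N i)" using sc_mod[OF i] by simp
    then show "(if i < N \<and> k < N \<and> k = (i + 1) mod N then c else 0) * f k = (if k = sc N i then c * f k else 0)"
      using i k by simp
  qed simp
  also have "\<dots> = c * f (sc N i)" using i by simp
  finally show ?thesis .
qed

lemma mulUL: "i < N \<Longrightarrow> lmul N (Umat N u) w r i j = w (r - 1) (pr N i) j + u i * w r i j"
proof -
  assume i: "i < N"
  have "lmul N (Umat N u) w r i j = (\<Sum>p\<in>{0,1}. \<Sum>k<N. Umat N u p i k * w (r - p) k j)"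
    by (rule lmul_sparseL) (auto intro: Umat_supp)
  also have "\<dots> = (\<Sum>k<N. Umat N u 0 i k * w r k j) + (\<Sum>k<N. Umat N u 1 i k * w (r - 1) k j)"
    by simp
  also have "(\<Sum>k<N. Umat N u 0 i k * w r k j) = (\<Sum>k<N. if k = i then u i * w r k j else 0)"
    by (rule sum.cong) (auto simp: Umat_def)
  also have "(\<Sum>k<N. Umat N u 1 i k * w (r - 1) k j) = (\<Sum>k<N. (if i < N \<and> k < N \<and> i = (k + 1) mod N then 1 else 0) * w (r - 1) k j)"
    by (rule sum.cong) (auto simp: Umat_def)
  finally show ?thesis using i sum_pr[OF i] by simp
qed

lemma mulUR: "j < N \<Longrightarrow> lmul N w (Umat N u) r i j = w (r - 1) i (sc N j) + w r i j * u j"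
proof -
  assume j: "j < N"
  have "lmul N w (Umat N u) r i j = (\<Sum>q\<in>{0,1}. \<Sum>k<N. w (r - q) i k * Umat N u q k j)"
    by (rule lmul_sparseR) (auto intro: Umat_supp)
  also have "\<dots> = (\<Sum>k<N. w r i k * Umat N u 0 k j) + (\<Sum>k<N. w (r - 1) i k * Umat N u 1 k j)"
    by simp
  also have "(\<Sum>k<N. w r i k * Umat N u 0 k j) = (\<Sum>k<N. if k = j then w r i k * u j else 0)"
    by (rule sum.cong) (auto simp: Umat_def)
  also have "(\<Sum>k<N. w (r - 1) i k * Umat N u 1 k j) = (\<Sum>k<N. (if j < N \<and> k < N \<and> k = (j + 1) mod N then 1 else 0) * w (r - 1) i k)"
    by (rule sum.cong) (auto simp: Umat_def)
  finally show ?thesis using j sum_sc[OF j, of 1] by simp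
qed

lemma mulVL: "i < N \<Longrightarrow> lmul N (Vmat N v) w r i j = w r i j + v i * w (r + 1) (sc N i) j"
proof -
  assume i: "i < N"
  have "lmul N (Vmat N v) w r i j = (\<Sum>p\<in>{0,-1}. \<Sum>k<N. Vmat N v p i k * w (r - p) k j)"
    by (rule lmul_sparseL) (auto intro: Vmat_supp)
  also have "\<dots> = (\<Sum>k<N. Vmat N v 0 i k * w r k j) + (\<Sum>k<N. Vmat N v (-1) i k * w (r + 1) k j)"
    by simp
  also have "(\<Sum>k<N. Vmat N v 0 i k * w r k j) = (\<Sum>k<N. if k = i then w r k j else 0)"
    by (rule sum.cong) (auto simp: Vmat_def)
  also have "(\<Sum>k<N. Vmat N v (-1) i k * w (r + 1) k j) = (\<Sum>k<N. (if i < N \<and> k < N \<and> k = (i + 1) mod N then v i else 0) * w (r + 1) k j)"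
    by (rule sum.cong) (auto simp: Vmat_def)
  finally show ?thesis using i sum_sc[OF i, of "v i"] by simp
qed

lemma mulVR: "j < N \<Longrightarrow> lmul N w (Vmat N v) r i j = w r i j + w (r + 1) i (pr N j) * v (pr N j)"
proof -
  assume j: "j < N"
  have "lmul N w (Vmat N v) r i j = (\<Sum>q\<in>{0,-1}. \<Sum>k<N. w (r - q) i k * Vmat N v q k j)"
    by (rule lmul_sparseR) (auto intro: Vmat_supp)
  also have "\<dots> = (\<Sum>k<N. w r i k * Vmat N v 0 k j) + (\<Sum>k<N. w (r + 1) i k * Vmat N v (-1) k j)"
    by simp
  also have "(\<Sum>k<N. w r i k * Vmat N v 0 k j) = (\<Sum>k<N. if k = j then w r i k else 0)"
    by (rule sum.cong) (auto simp: Vmat_def)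
  also have "(\<Sum>k<N. w (r + 1) i k * Vmat N v (-1) k j) = (\<Sum>k<N. (if j < N \<and> k < N \<and> j = (k + 1) mod N then 1 else 0) * (w (r + 1) i k * v k))"
    by (rule sum.cong) (auto simp: Vmat_def)
  finally show ?thesis using j sum_pr[OF j, of "\<lambda>k. w (r + 1) i k * v k"] by simp
qed


lemma sc_inj[simp]: "a < N \<Longrightarrow> b < N \<Longrightarrow> (sc N a = sc N b) = (a = b)"
  by (auto simp: sc_def split: if_splits)
lemma pr_inj[simp]: "a < N \<Longrightarrow> b < N \<Longrightarrow> (pr N a = pr N b) = (a = b)"
  by (auto simp: pr_def split: if_splits)
lemma sc_eq_iff2: "i < N \<Longrightarrow> k < N \<Longrightarrow> (sc N k = i) = (k = pr N i)"
  by (auto simp: sc_def pr_def)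
lemma sc_eq_iff1: "i < N \<Longrightarrow> k < N \<Longrightarrow> (i = sc N k) = (k = pr N i)"
  by (auto simp: sc_def pr_def)

definition tm :: "nat \<Rightarrow> opmat \<Rightarrow> opmat \<Rightarrow> opmat \<Rightarrow> opmat \<Rightarrow> loop \<times> loop \<Rightarrow> loop \<times> loop \<Rightarrow> nat \<Rightarrow> nat \<Rightarrow> loop" where
  "tm N Ao Bo Co Do L X i j =
     lsub (ladd (lsub (lmul N (cmp L i) (Ao i j (lmul N (cmp X j) (cmp L j))))
                      (lmul N (Do i j (lmul N (cmp L j) (cmp X j))) (cmp L i)))
                (lmul N (cmp L i) (Bo i j (lmul N (cmp L j) (cmp X j)))))
          (lmul N (Co i j (lmul N (cmp X j) (cmp L j))) (cmp L i))"

definition TT :: "nat \<Rightarrow> (nat \<Rightarrow> real) \<Rightarrow> (nat \<Rightarrow> real) \<Rightarrow> loop \<times> loop \<Rightarrow> nat \<Rightarrow> loop" where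
  "TT N u v X i = ladd (tm N (boldA N) (boldB N) (boldC N) (boldD N) (Umat N u, Vmat N v) X i 0)
                      (tm N (boldA N) (boldB N) (boldC N) (boldD N) (Umat N u, Vmat N v) X i 1)"

lemmas opdefs = Aop_def Dop_def Bop_def Cop_def lhalf_def ladd_def lsub_def R0_def Pplus_def
  Pminus_def Pzero_def PiOp_def lneg_def


lemma psum_pr: "i < N \<Longrightarrow> (\<Sum>l<N. piI l i * f l) = (\<Sum>l<N. piI l (pr N i) * f l) - f (pr N i) - f i + (if i = 0 then 2 * (\<Sum>l<N. f l) else 0)"
proof -
  assume i: "i < N"
  show ?thesis
  proof (cases "i = 0")
    case True
    have e1: "(\<Sum>l<N. piI l i * f l) = (\<Sum>l<N. f l - (if l = 0 then f l else 0))"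
      by (rule sum.cong) (auto simp: piI_def True)
    have e2: "(\<Sum>l<N. piI l (pr N i) * f l) = (\<Sum>l<N. (if l = N - 1 then f l else 0) - f l)"
      by (rule sum.cong) (auto simp: piI_def True pr_def)
    show ?thesis using i True unfolding e1 e2 sum_subtractf by (simp add: pr_def)
  next
    case False
    have e: "(\<Sum>l<N. piI l i * f l) = (\<Sum>l<N. piI l (pr N i) * f l + (- (if l = i - 1 then f l else 0) - (if l = i then f l else 0)))"
      by (rule sum.cong) (use False in \<open>auto simp: piI_def pr_def\<close>)
    show ?thesis using i False unfolding e sum.distrib sum_subtractf by (auto simp: pr_def sum_negf)
  qed
qed

lemma trace_shift:
  "(\<Sum>l<N. (w (pr N l) l :: real)) = (\<Sum>l<N. w l (sc N l))"
  "(\<Sum>l<N. (c (pr N l) * w l (pr N l) :: real)) = (\<Sum>l<N. c l * w (sc N l) l)"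
proof -
  have bij: "bij_betw (sc N) {..<N} {..<N}"
    by (rule bij_betw_byWitness[where f'="pr N"]) auto
  show "(\<Sum>l<N. (w (pr N l) l :: real)) = (\<Sum>l<N. w l (sc N l))"
    using sum.reindex_bij_betw[OF bij, of "\<lambda>m. w (pr N m) m"] by simp
  show "(\<Sum>l<N. (c (pr N l) * w l (pr N l) :: real)) = (\<Sum>l<N. c l * w (sc N l) l)"
    using sum.reindex_bij_betw[OF bij, of "\<lambda>m. c (pr N m) * w m (pr N m)"] by simp
qed

lemmas Tunf = TT_def tm_def cmp_def boldA_def boldB_def boldC_def boldD_def mk2_def

lemma T0_big:
  assumes a: "a < N" and b: "b < N" and p: "2 \<le> p"
  shows "TT N u v X 0 p a b = 0"
  using a b p
  apply (simp add: Tunf)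
  apply (simp add: mulUL mulUR mulVL mulVR opdefs)
  apply (simp add: field_simps)
  done

lemma T0_neg:
  assumes a: "a < N" and b: "b < N" and p: "p \<le> -1"
  shows "TT N u v X 0 p a b = 0"
  using a b p
  apply (simp add: Tunf)
  apply (simp add: mulUL mulUR mulVL mulVR opdefs)
  apply (simp add: field_simps)
  done

lemma T1_big:
  assumes a: "a < N" and b: "b < N" and p: "1 \<le> p"
  shows "TT N u v X 1 p a b = 0"
  using a b p
  apply (simp add: Tunf)
  apply (simp add: mulUL mulUR mulVL mulVR opdefs)
  apply (simp add: field_simps)
  done

lemma T1_neg:
  assumes a: "a < N" and b: "b < N" and p: "p \<le> -2"
  shows "TT N u v X 1 p a b = 0"
  using a b p
  apply (simp add: Tunf)
  apply (simp add: mulUL mulUR mulVL mulVR opdefs)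
  apply (simp add: field_simps)
  done

lemma T1_0:
  assumes a: "a < N" and b: "b < N"
  shows "TT N u v X 1 0 a b = 0"
  using a b
  apply (simp add: Tunf)
  apply (simp add: mulUL mulUR mulVL mulVR opdefs)
  apply (simp add: field_simps)
  done


locale tw =
  fixes N :: nat and X :: "loop \<times> loop"
  assumes tw0: "\<And>k a b. a < N \<Longrightarrow> b < N \<Longrightarrow> a \<noteq> b \<Longrightarrow> cmp X k 0 a b = 0"
    and tw1: "\<And>k a b. a < N \<Longrightarrow> b < N \<Longrightarrow> a \<noteq> sc N b \<Longrightarrow> cmp X k 1 a b = 0"
    and twm1: "\<And>k a b. a < N \<Longrightarrow> b < N \<Longrightarrow> b \<noteq> sc N a \<Longrightarrow> cmp X k (-1) a b = 0"
begin

lemma fst_tw: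
  "\<And>a b. a < N \<Longrightarrow> b < N \<Longrightarrow> a \<noteq> b \<Longrightarrow> fst X 0 a b = 0"
  "\<And>a b. a < N \<Longrightarrow> b < N \<Longrightarrow> a \<noteq> sc N b \<Longrightarrow> fst X 1 a b = 0"
  "\<And>a b. a < N \<Longrightarrow> b < N \<Longrightarrow> b \<noteq> sc N a \<Longrightarrow> fst X (-1) a b = 0"
  "\<And>a b. a < N \<Longrightarrow> b < N \<Longrightarrow> a \<noteq> b \<Longrightarrow> snd X 0 a b = 0"
  "\<And>a b. a < N \<Longrightarrow> b < N \<Longrightarrow> a \<noteq> sc N b \<Longrightarrow> snd X 1 a b = 0"
  "\<And>a b. a < N \<Longrightarrow> b < N \<Longrightarrow> b \<noteq> sc N a \<Longrightarrow> snd X (-1) a b = 0"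
  using tw0[of _ _ 0] tw1[of _ _ 0] twm1[of _ _ 0] tw0[of _ _ 1] tw1[of _ _ 1] twm1[of _ _ 1]
  by (auto simp: cmp_def)

lemma T0_1:
  assumes a: "a < N" and b: "b < N"
  shows "TT N u v X 0 1 a b = 0"
proof (cases "b = pr N a")
  case False
  then show ?thesis using a b
  apply (simp add: Tunf)
  apply (simp add: mulUL mulUR mulVL mulVR opdefs fst_tw sc_eq_iff1 sc_eq_iff2)
  done
next
  case True
  then show ?thesis using a b
  apply (simp add: Tunf)
  apply (simp add: mulUL mulUR mulVL mulVR opdefs fst_tw sc_eq_iff1 sc_eq_iff2 psum_pr[OF a])
  apply (simp add: field_simps sum.distrib trace_shift)
  done
qed

lemma T0_0:
  assumes a: "a < N" and b: "b < N" and ab: "a \<noteq> b"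
  shows "TT N u v X 0 0 a b = 0"
  using a b ab
  apply (simp add: Tunf)
  apply (simp add: mulUL mulUR mulVL mulVR opdefs fst_tw sc_eq_iff1 sc_eq_iff2)
  done

lemma T1_m1:
  assumes a: "a < N" and b: "b < N" and ab: "b \<noteq> sc N a"
  shows "TT N u v X 1 (-1) a b = 0"
  using a b ab
  apply (simp add: Tunf)
  apply (simp add: mulUL mulUR mulVL mulVR opdefs fst_tw sc_eq_iff1 sc_eq_iff2)
  done
end


definition ba :: "loop \<Rightarrow> bool" where
  "ba w \<longleftrightarrow> (\<exists>P. \<forall>p>P. \<forall>i j. w p i j = 0)"

definition sp :: "loop \<Rightarrow> bool" where
  "sp L \<longleftrightarrow> (\<forall>f. f \<notin> {-1..1} \<longrightarrow> L f = (\<lambda>_ _. 0))"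

lemma nz_ex: "w p \<noteq> (\<lambda>_ _. 0) \<Longrightarrow> \<exists>i j. w p i j \<noteq> 0"
  by (auto simp: fun_eq_iff)

lemma lmulR_sp: "sp L \<Longrightarrow> lmul N w L r i j = (\<Sum>f\<in>{-1..1}. \<Sum>k<N. w (r - f) i k * L f k j)"
  by (rule lmul_sparseR) (auto simp: sp_def)
lemma lmulL_sp: "sp L \<Longrightarrow> lmul N L w r i j = (\<Sum>f\<in>{-1..1}. \<Sum>k<N. L f i k * w (r - f) k j)"
  by (rule lmul_sparseL) (auto simp: sp_def)

lemma ba_lmulR: assumes "sp L" "ba w" shows "ba (lmul N w L)"
proof -
  obtain P where P: "\<forall>p>P. \<forall>i j. w p i j = 0" using assms(2) by (auto simp: ba_def)
  have "\<forall>r>P+1. \<forall>i j. lmul N w L r i j = 0"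
  proof (intro allI impI)
    fix r i j assume r: "r > P + 1"
    show "lmul N w L r i j = 0" unfolding lmulR_sp[OF assms(1)]
      by (rule sum.neutral) (use P r in auto)
  qed
  then show ?thesis unfolding ba_def by blast
qed

lemma ba_lmulL: assumes "sp L" "ba w" shows "ba (lmul N L w)"
proof -
  obtain P where P: "\<forall>p>P. \<forall>i j. w p i j = 0" using assms(2) by (auto simp: ba_def)
  have "\<forall>r>P+1. \<forall>i j. lmul N L w r i j = 0"
  proof (intro allI impI)
    fix r i j assume r: "r > P + 1"
    show "lmul N L w r i j = 0" unfolding lmulL_sp[OF assms(1)]
      by (rule sum.neutral) (use P r in auto)
  qed
  then show ?thesis unfolding ba_def by blast
qed

lemma ba_ops:
  assumes "ba w"
  shows "ba (Aop N w)" "ba (Bop N w)" "ba (Cop N w)" "ba (Dop N w)" "ba (lneg (Bop N w))" "ba (lneg (Cop N w))"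
proof -
  obtain P where P: "\<forall>p>P. \<forall>i j. w p i j = 0" using assms by (auto simp: ba_def)
  have "\<forall>p>max P 0. \<forall>i j. Aop N w p i j = 0 \<and> Bop N w p i j = 0 \<and> Cop N w p i j = 0 \<and> Dop N w p i j = 0
     \<and> lneg (Bop N w) p i j = 0 \<and> lneg (Cop N w) p i j = 0"
    using P by (auto simp: opdefs)
  then show "ba (Aop N w)" "ba (Bop N w)" "ba (Cop N w)" "ba (Dop N w)" "ba (lneg (Bop N w))" "ba (lneg (Cop N w))"
    unfolding ba_def by blast+
qed

lemma ba_add: "ba a \<Longrightarrow> ba b \<Longrightarrow> ba (ladd a b)" and ba_sub: "ba a \<Longrightarrow> ba b \<Longrightarrow> ba (lsub a b)"
proof -
  assume "ba a" "ba b"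
  then obtain P Q where P: "\<forall>p>P. \<forall>i j. a p i j = 0" and Q: "\<forall>p>Q. \<forall>i j. b p i j = 0" by (auto simp: ba_def)
  then have "\<forall>p>max P Q. \<forall>i j. ladd a b p i j = 0" "\<forall>p>max P Q. \<forall>i j. lsub a b p i j = 0"
    by (auto simp: ladd_def lsub_def)
  then show "ba (ladd a b)" "ba (lsub a b)" unfolding ba_def by blast+
qed

lemma sp_U: "sp (Umat N u)" by (auto simp: sp_def intro!: Umat_supp)
lemma sp_V: "sp (Vmat N u)" by (auto simp: sp_def intro!: Vmat_supp)

lemma ba_in_g: "in_g N w \<Longrightarrow> ba w"
  by (auto simp: in_g_def ba_def)

lemma lmul_ba:
  assumes "\<forall>p>P. \<forall>i j. u p i j = 0" "\<forall>q>Q. \<forall>i j. v q i j = 0" "A = {r - Q..P}"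
  shows "lmul N u v r i j = (\<Sum>p\<in>A. \<Sum>k<N. u p i k * v (r - p) k j)"
proof (rule lmul_superset)
  show "finite A" using assms(3) by simp
  show "{p. u p \<noteq> (\<lambda>_ _. 0) \<and> v (r - p) \<noteq> (\<lambda>_ _. 0)} \<subseteq> A"
  proof
    fix p assume "p \<in> {p. u p \<noteq> (\<lambda>_ _. 0) \<and> v (r - p) \<noteq> (\<lambda>_ _. 0)}"
    then have "\<exists>i j. u p i j \<noteq> 0" "\<exists>i j. v (r - p) i j \<noteq> 0" by (auto dest!: nz_ex)
    then have "\<not> p > P" "\<not> r - p > Q" using assms(1,2) by auto
    then show "p \<in> A" using assms(3) by auto
  qed
qed

lemma lpair_add:
  assumes "ba a" "ba b" "ba Y"
  shows "lpair N (ladd a b) Y = lpair N a Y + lpair N b Y"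
    and "lpair N (lsub a b) Y = lpair N a Y - lpair N b Y"
proof -
  obtain P Q R where P: "\<forall>p>P. \<forall>i j. a p i j = 0" and Q: "\<forall>p>Q. \<forall>i j. b p i j = 0"
    and R: "\<forall>p>R. \<forall>i j. Y p i j = 0" using assms by (auto simp: ba_def)
  let ?A = "{0 - R..max P Q}"
  have PP: "\<forall>p>max P Q. \<forall>i j. a p i j = 0" "\<forall>p>max P Q. \<forall>i j. b p i j = 0"
    "\<forall>p>max P Q. \<forall>i j. ladd a b p i j = 0" "\<forall>p>max P Q. \<forall>i j. lsub a b p i j = 0"
    using P Q by (auto simp: ladd_def lsub_def)
  note e = lmul_ba[OF PP(1) R refl] lmul_ba[OF PP(2) R refl] lmul_ba[OF PP(3) R refl] lmul_ba[OF PP(4) R refl]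
  show "lpair N (ladd a b) Y = lpair N a Y + lpair N b Y"
    unfolding lpair_def e by (simp add: ladd_def algebra_simps sum.distrib)
  show "lpair N (lsub a b) Y = lpair N a Y - lpair N b Y"
    unfolding lpair_def e by (simp add: lsub_def algebra_simps sum_subtractf)
qed


lemma reorg1:
  "(\<Sum>i\<in>I. \<Sum>p\<in>Pp. \<Sum>k\<in>K. (a p i k :: real) * (\<Sum>f\<in>F. \<Sum>m\<in>M. y f p k m * l f m i))
   = (\<Sum>f\<in>F. \<Sum>p\<in>Pp. \<Sum>i\<in>I. \<Sum>k\<in>K. \<Sum>m\<in>M. a p i k * y f p k m * l f m i)"
  by (simp add: sum_distrib_left mult.assoc sum.swap[where B=F] sum.swap[where A=I and B=Pp])

lemma reorg2:
  "(\<Sum>i\<in>I. \<Sum>q\<in>Pp. \<Sum>k\<in>K. (\<Sum>f\<in>F. \<Sum>m\<in>M. (l f i m :: real) * a f q m k) * y q k i)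
   = (\<Sum>f\<in>F. \<Sum>q\<in>Pp. \<Sum>m\<in>M. \<Sum>k\<in>K. \<Sum>i\<in>I. a f q m k * y q k i * l f i m)"
  by (simp add: sum_distrib_right sum_distrib_left mult_ac sum.swap[where B=F] sum.swap[where A=I and B=Pp]
      sum.swap[where A=I and B=M] sum.swap[where A=I and B=K] sum.swap[where A=K and B=M])


lemma sum_supp_eq:
  assumes "finite A" "finite B" "\<And>p. g p \<noteq> 0 \<Longrightarrow> p \<in> A \<and> p \<in> B"
  shows "sum g A = sum g B"
proof -
  have "sum g A = sum g (A \<inter> B)"
    by (rule sum.mono_neutral_right) (use assms in auto)
  also have "\<dots> = sum g B"
    by (rule sum.mono_neutral_left) (use assms in auto)
  finally show ?thesis .
qed

lemma cyc_R:
  assumes L: "sp L" and a: "ba a" and Y: "ba Y"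
  shows "lpair N a (lmul N Y L) = lpair N (lmul N L a) Y"
proof -
  obtain P Q where P: "\<forall>p>P. \<forall>i j. a p i j = 0" and Q: "\<forall>p>Q. \<forall>i j. Y p i j = 0"
    using a Y by (auto simp: ba_def)
  have YL: "\<forall>s>Q+1. \<forall>k i. lmul N Y L s k i = 0"
  proof (intro allI impI)
    fix s k i assume s: "s > Q + 1"
    show "lmul N Y L s k i = 0" unfolding lmulR_sp[OF L]
      by (rule sum.neutral) (use Q s in auto)
  qed
  have La: "\<forall>s>P+1. \<forall>k i. lmul N L a s k i = 0"
  proof (intro allI impI)
    fix s k i assume s: "s > P + 1"
    show "lmul N L a s k i = 0" unfolding lmulL_sp[OF L]
      by (rule sum.neutral) (use P s in auto)
  qed
  define G where "G f p = (\<Sum>i<N. \<Sum>k<N. \<Sum>m<N. a p i k * Y (0 - p - f) k m * L f m i)" for f p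
  have "lpair N a (lmul N Y L) = (\<Sum>i<N. \<Sum>p\<in>{0 - (Q+1)..P}. \<Sum>k<N. a p i k * lmul N Y L (0 - p) k i)"
    unfolding lpair_def lmul_ba[OF P YL refl] ..
  also have "\<dots> = (\<Sum>i<N. \<Sum>p\<in>{0 - (Q+1)..P}. \<Sum>k<N. a p i k * (\<Sum>f\<in>{-1..1}. \<Sum>m<N. Y (0 - p - f) k m * L f m i))"
    unfolding lmulR_sp[OF L] ..
  also have "\<dots> = (\<Sum>f\<in>{-1..1}. \<Sum>p\<in>{0 - (Q+1)..P}. G f p)"
    unfolding reorg1 G_def ..
  finally have lhs: "lpair N a (lmul N Y L) = (\<Sum>f\<in>{-1..1}. \<Sum>p\<in>{0 - (Q+1)..P}. G f p)" .
  have "lpair N (lmul N L a) Y = (\<Sum>i<N. \<Sum>q\<in>{0 - Q..P+1}. \<Sum>k<N. lmul N L a q i k * Y (0 - q) k i)"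
    unfolding lpair_def lmul_ba[OF La Q refl] ..
  also have "\<dots> = (\<Sum>i<N. \<Sum>q\<in>{0 - Q..P+1}. \<Sum>k<N. (\<Sum>f\<in>{-1..1}. \<Sum>m<N. L f i m * a (q - f) m k) * Y (0 - q) k i)"
    unfolding lmulL_sp[OF L] ..
  also have "\<dots> = (\<Sum>f\<in>{-1..1}. \<Sum>q\<in>{0 - Q..P+1}. G f (q - f))"
    unfolding reorg2 G_def by simp
  finally have rhs: "lpair N (lmul N L a) Y = (\<Sum>f\<in>{-1..1}. \<Sum>q\<in>{0 - Q..P+1}. G f (q - f))" .
  have per: "(\<Sum>p\<in>{0 - (Q+1)..P}. G f p) = (\<Sum>q\<in>{0 - Q..P+1}. G f (q - f))" if f: "f \<in> {-1..1}" for f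
  proof -
    have "(\<Sum>q\<in>{0 - Q..P+1}. G f (q - f)) = (\<Sum>p\<in>(\<lambda>q. q - f) ` {0 - Q..P+1}. G f p)"
      by (subst sum.reindex) (auto simp: inj_on_def)
    also have "\<dots> = (\<Sum>p\<in>{0 - (Q+1)..P}. G f p)"
    proof (rule sum_supp_eq)
      fix p assume nz: "G f p \<noteq> 0"
      have p1: "p \<le> P"
      proof (rule ccontr)
        assume "\<not> p \<le> P" then have "G f p = 0" using P by (simp add: G_def)
        then show False using nz by simp
      qed
      have p2: "0 - p - f \<le> Q"
      proof (rule ccontr)
        assume "\<not> 0 - p - f \<le> Q" then have "G f p = 0" using Q by (simp add: G_def)
        then show False using nz by simp
      qed
      have "p + f \<in> {0 - Q..P+1}" using p1 p2 f by auto
      then have "p \<in> (\<lambda>q. q - f) ` {0 - Q..P+1}" by (auto simp: image_iff intro!: bexI[of _ "p + f"])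
      then show "p \<in> (\<lambda>q. q - f) ` {0 - Q..P+1} \<and> p \<in> {0 - (Q+1)..P}" using p1 p2 f by auto
    qed auto
    finally show ?thesis by simp
  qed
  show ?thesis unfolding lhs rhs by (rule sum.cong[OF refl], rule per) simp
qed


lemma reorg3:
  "(\<Sum>i\<in>I. \<Sum>p\<in>Pp. \<Sum>k\<in>K. (a p i k :: real) * (\<Sum>f\<in>F. \<Sum>m\<in>M. c f k m * d f p m i))
   = (\<Sum>f\<in>F. \<Sum>p\<in>Pp. \<Sum>i\<in>I. \<Sum>k\<in>K. \<Sum>m\<in>M. a p i k * c f k m * d f p m i)"
  by (simp add: sum_distrib_left mult.assoc sum.swap[where B=F] sum.swap[where A=I and B=Pp])

lemma reorg4:
  "(\<Sum>i\<in>I. \<Sum>q\<in>Pp. \<Sum>k\<in>K. (\<Sum>f\<in>F. \<Sum>m\<in>M. (a f q i m :: real) * c f m k) * y q k i)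
   = (\<Sum>f\<in>F. \<Sum>q\<in>Pp. \<Sum>i\<in>I. \<Sum>m\<in>M. \<Sum>k\<in>K. a f q i m * c f m k * y q k i)"
  by (simp add: sum_distrib_right sum_distrib_left mult_ac sum.swap[where B=F] sum.swap[where A=I and B=Pp]
      sum.swap[where A=K and B=M])

lemma cyc_L:
  assumes L: "sp L" and a: "ba a" and Y: "ba Y"
  shows "lpair N a (lmul N L Y) = lpair N (lmul N a L) Y"
proof -
  obtain P Q where P: "\<forall>p>P. \<forall>i j. a p i j = 0" and Q: "\<forall>p>Q. \<forall>i j. Y p i j = 0"
    using a Y by (auto simp: ba_def)
  have YL: "\<forall>s>Q+1. \<forall>k i. lmul N L Y s k i = 0"
  proof (intro allI impI)
    fix s k i assume s: "s > Q + 1"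
    show "lmul N L Y s k i = 0" unfolding lmulL_sp[OF L]
      by (rule sum.neutral) (use Q s in auto)
  qed
  have La: "\<forall>s>P+1. \<forall>k i. lmul N a L s k i = 0"
  proof (intro allI impI)
    fix s k i assume s: "s > P + 1"
    show "lmul N a L s k i = 0" unfolding lmulR_sp[OF L]
      by (rule sum.neutral) (use P s in auto)
  qed
  define G where "G f p = (\<Sum>i<N. \<Sum>k<N. \<Sum>m<N. a p i k * L f k m * Y (0 - p - f) m i)" for f p
  have "lpair N a (lmul N L Y) = (\<Sum>i<N. \<Sum>p\<in>{0 - (Q+1)..P}. \<Sum>k<N. a p i k * lmul N L Y (0 - p) k i)"
    unfolding lpair_def lmul_ba[OF P YL refl] ..
  also have "\<dots> = (\<Sum>i<N. \<Sum>p\<in>{0 - (Q+1)..P}. \<Sum>k<N. a p i k * (\<Sum>f\<in>{-1..1}. \<Sum>m<N. L f k m * Y (0 - p - f) m i))"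
    unfolding lmulL_sp[OF L] ..
  also have "\<dots> = (\<Sum>f\<in>{-1..1}. \<Sum>p\<in>{0 - (Q+1)..P}. G f p)"
    unfolding reorg3 G_def ..
  finally have lhs: "lpair N a (lmul N L Y) = (\<Sum>f\<in>{-1..1}. \<Sum>p\<in>{0 - (Q+1)..P}. G f p)" .
  have "lpair N (lmul N a L) Y = (\<Sum>i<N. \<Sum>q\<in>{0 - Q..P+1}. \<Sum>k<N. lmul N a L q i k * Y (0 - q) k i)"
    unfolding lpair_def lmul_ba[OF La Q refl] ..
  also have "\<dots> = (\<Sum>i<N. \<Sum>q\<in>{0 - Q..P+1}. \<Sum>k<N. (\<Sum>f\<in>{-1..1}. \<Sum>m<N. a (q - f) i m * L f m k) * Y (0 - q) k i)"
    unfolding lmulR_sp[OF L] ..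
  also have "\<dots> = (\<Sum>f\<in>{-1..1}. \<Sum>q\<in>{0 - Q..P+1}. G f (q - f))"
    unfolding reorg4 G_def by simp
  finally have rhs: "lpair N (lmul N a L) Y = (\<Sum>f\<in>{-1..1}. \<Sum>q\<in>{0 - Q..P+1}. G f (q - f))" .
  have per: "(\<Sum>p\<in>{0 - (Q+1)..P}. G f p) = (\<Sum>q\<in>{0 - Q..P+1}. G f (q - f))" if f: "f \<in> {-1..1}" for f
  proof -
    have "(\<Sum>q\<in>{0 - Q..P+1}. G f (q - f)) = (\<Sum>p\<in>(\<lambda>q. q - f) ` {0 - Q..P+1}. G f p)"
      by (subst sum.reindex) (auto simp: inj_on_def)
    also have "\<dots> = (\<Sum>p\<in>{0 - (Q+1)..P}. G f p)"
    proof (rule sum_supp_eq)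
      fix p assume nz: "G f p \<noteq> 0"
      have p1: "p \<le> P"
      proof (rule ccontr)
        assume "\<not> p \<le> P" then have "G f p = 0" using P by (simp add: G_def)
        then show False using nz by simp
      qed
      have p2: "0 - p - f \<le> Q"
      proof (rule ccontr)
        assume "\<not> 0 - p - f \<le> Q" then have "G f p = 0" using Q by (simp add: G_def)
        then show False using nz by simp
      qed
      have "p + f \<in> {0 - Q..P+1}" using p1 p2 f by auto
      then have "p \<in> (\<lambda>q. q - f) ` {0 - Q..P+1}" by (auto simp: image_iff intro!: bexI[of _ "p + f"])
      then show "p \<in> (\<lambda>q. q - f) ` {0 - Q..P+1} \<and> p \<in> {0 - (Q+1)..P}" using p1 p2 f by auto
    qed auto
    finally show ?thesis by simp
  qed
  show ?thesis unfolding lhs rhs by (rule sum.cong[OF refl], rule per) simp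
qed


lemma ba_bold:
  assumes "ba w"
  shows "ba (boldA N i j w)" "ba (boldB N i j w)" "ba (boldC N i j w)" "ba (boldD N i j w)"
  using ba_ops[OF assms, of N]
  by (auto simp: boldA_def boldB_def boldC_def boldD_def mk2_def)

lemma term_eq:
  assumes Li: "sp (cmp L i)" and Lj: "sp (cmp L j)" and Xj: "ba (cmp X j)" and Yi: "ba (cmp Y i)"
  shows "lpair N (boldA N i j (lmul N (cmp X j) (cmp L j))) (lmul N (cmp Y i) (cmp L i))
      - lpair N (boldD N i j (lmul N (cmp L j) (cmp X j))) (lmul N (cmp L i) (cmp Y i))
      + lpair N (boldB N i j (lmul N (cmp L j) (cmp X j))) (lmul N (cmp Y i) (cmp L i))
      - lpair N (boldC N i j (lmul N (cmp X j) (cmp L j))) (lmul N (cmp L i) (cmp Y i))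
      = lpair N (tm N (boldA N) (boldB N) (boldC N) (boldD N) L X i j) (cmp Y i)"
proof -
  have b1: "ba (lmul N (cmp X j) (cmp L j))" by (rule ba_lmulR[OF Lj Xj])
  have b2: "ba (lmul N (cmp L j) (cmp X j))" by (rule ba_lmulL[OF Lj Xj])
  note bb = ba_bold[OF b1, of N i j] ba_bold[OF b2, of N i j]
  have t1: "ba (lmul N (cmp L i) (boldA N i j (lmul N (cmp X j) (cmp L j))))" by (rule ba_lmulL[OF Li bb(1)])
  have t2: "ba (lmul N (boldD N i j (lmul N (cmp L j) (cmp X j))) (cmp L i))" by (rule ba_lmulR[OF Li bb(8)])
  have t3: "ba (lmul N (cmp L i) (boldB N i j (lmul N (cmp L j) (cmp X j))))" by (rule ba_lmulL[OF Li bb(6)])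
  have t4: "ba (lmul N (boldC N i j (lmul N (cmp X j) (cmp L j))) (cmp L i))" by (rule ba_lmulR[OF Li bb(3)])
  show ?thesis
    unfolding tm_def
    using lpair_add[OF ba_add[OF ba_sub[OF t1 t2] t3] t4 Yi] lpair_add[OF ba_sub[OF t1 t2] t3 Yi]
      lpair_add[OF t1 t2 Yi]
      cyc_R[OF Li bb(1) Yi] cyc_L[OF Li bb(8) Yi] cyc_R[OF Li bb(6) Yi] cyc_L[OF Li bb(3) Yi]
    by simp
qed

lemma sum2: "(\<Sum>k<(2::nat). f k) = f 0 + (f 1 :: real)"
  by (simp add: numeral_2_eq_2)

lemma PB_eq:
  assumes X: "in_gg N X" and Y: "in_gg N Y"
  shows "PB N (boldA N) (boldB N) (boldC N) (boldD N) (Umat N u, Vmat N v) X Y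
       = (\<Sum>k<2. lpair N (TT N u v X k) (cmp Y k))"
proof -
  let ?L = "(Umat N u, Vmat N v)"
  have spL: "sp (cmp ?L k)" for k by (simp add: cmp_def sp_U sp_V)
  have bX: "ba (cmp X k)" for k using X by (auto simp: cmp_def in_gg_def intro: ba_in_g)
  have bY: "ba (cmp Y k)" for k using Y by (auto simp: cmp_def in_gg_def intro: ba_in_g)
  have bT: "ba (tm N (boldA N) (boldB N) (boldC N) (boldD N) ?L X i j)" for i j
  proof -
    have b1: "ba (lmul N (cmp X j) (cmp ?L j))" by (rule ba_lmulR[OF spL bX])
    have b2: "ba (lmul N (cmp ?L j) (cmp X j))" by (rule ba_lmulL[OF spL bX])
    note bb = ba_bold[OF b1, of N i j] ba_bold[OF b2, of N i j]
    show ?thesis unfolding tm_def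
      by (intro ba_add ba_sub ba_lmulL ba_lmulR spL bb)
  qed
  have "PB N (boldA N) (boldB N) (boldC N) (boldD N) ?L X Y
     = (\<Sum>i<2. \<Sum>j<2. lpair N (tm N (boldA N) (boldB N) (boldC N) (boldD N) ?L X i j) (cmp Y i))"
    unfolding PB_def using term_eq[OF spL spL bX bY] by simp
  also have "\<dots> = (\<Sum>i<2. lpair N (TT N u v X i) (cmp Y i))"
    unfolding TT_def sum2 using lpair_add(1)[OF bT bT bY] by simp
  finally show ?thesis .
qed


definition zo :: "nat \<Rightarrow> loop \<Rightarrow> bool" where
  "zo N w \<longleftrightarrow> (\<forall>p i j. (N \<le> i \<or> N \<le> j) \<longrightarrow> w p i j = 0)"

lemma zo_lmul: "zo N u \<Longrightarrow> zo N v \<Longrightarrow> zo N (lmul N u v)"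
  unfolding zo_def lmul_def by (auto intro!: sum.neutral)

lemma zo_U: "zo N (Umat N u)" by (auto simp: zo_def Umat_def)
lemma zo_V: "zo N (Vmat N u)" by (auto simp: zo_def Vmat_def)
lemma zo_add: "zo N a \<Longrightarrow> zo N b \<Longrightarrow> zo N (ladd a b)" by (auto simp: zo_def ladd_def)
lemma zo_sub: "zo N a \<Longrightarrow> zo N b \<Longrightarrow> zo N (lsub a b)" by (auto simp: zo_def lsub_def)
lemma zo_bold:
  assumes "zo N w"
  shows "zo N (boldA N i j w)" "zo N (boldB N i j w)" "zo N (boldC N i j w)" "zo N (boldD N i j w)"
  using assms by (auto simp: zo_def boldA_def boldB_def boldC_def boldD_def mk2_def opdefs)

lemma zo_TT:
  assumes "zo N (fst X)" "zo N (snd X)"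
  shows "zo N (TT N u v X k)"
proof -
  have zL: "zo N (cmp (Umat N u, Vmat N v) k)" for k by (simp add: cmp_def zo_U zo_V)
  have zX: "zo N (cmp X k)" for k using assms by (simp add: cmp_def)
  have t: "zo N (tm N (boldA N) (boldB N) (boldC N) (boldD N) (Umat N u, Vmat N v) X k j)" for k j
    unfolding tm_def
    apply (rule zo_sub)
     apply (rule zo_add)
      apply (rule zo_sub)
       apply (rule zo_lmul[OF zL zo_bold(1)[OF zo_lmul[OF zX zL]]])
      apply (rule zo_lmul[OF zo_bold(4)[OF zo_lmul[OF zL zX]] zL])
     apply (rule zo_lmul[OF zL zo_bold(2)[OF zo_lmul[OF zL zX]]])
    apply (rule zo_lmul[OF zo_bold(3)[OF zo_lmul[OF zX zL]] zL])
    done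
  show ?thesis unfolding TT_def by (rule zo_add[OF t t])
qed

lemma dvd_small: "int N dvd x \<Longrightarrow> \<bar>x\<bar> < int N \<Longrightarrow> x = 0"
proof (rule ccontr)
  assume d: "int N dvd x" and l: "\<bar>x\<bar> < int N" and x: "x \<noteq> 0"
  have "\<bar>int N\<bar> \<le> \<bar>x\<bar>" by (rule dvd_imp_le_int[OF x d])
  then show False using l by simp
qed

lemma in_g_tw:
  assumes g: "in_g N w" and a: "a < N" and b: "b < N"
  shows "a \<noteq> b \<Longrightarrow> w 0 a b = 0"
    and "a \<noteq> sc N b \<Longrightarrow> w 1 a b = 0"
    and "b \<noteq> sc N a \<Longrightarrow> w (-1) a b = 0"
proof -
  have T: "w p a b \<noteq> 0 \<Longrightarrow> int N dvd (int a - int b - p)" for p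
    using g unfolding in_g_def by (metis mod_eq_dvd_iff)
  show "a \<noteq> b \<Longrightarrow> w 0 a b = 0"
  proof (rule ccontr)
    assume "a \<noteq> b" "w 0 a b \<noteq> 0"
    then have "int N dvd (int a - int b)" using T[of 0] by simp
    then have "int a - int b = 0" using a b by (intro dvd_small) auto
    then show False using \<open>a \<noteq> b\<close> by simp
  qed
  show "a \<noteq> sc N b \<Longrightarrow> w 1 a b = 0"
  proof (rule ccontr)
    assume ne: "a \<noteq> sc N b" and nz: "w 1 a b \<noteq> 0"
    then have d: "int N dvd (int a - int b - 1)" using T[of 1] by simp
    show False
    proof (cases "int a - int b - 1 = - int N")
      case True
      then have "a = 0" "b = N - 1" using a b by auto
      then show False using ne b by (auto simp: sc_def)
    next
      case False
      then have "int a - int b - 1 = 0" using a b d by (intro dvd_small) auto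
      then show False using ne a by (auto simp: sc_def)
    qed
  qed
  show "b \<noteq> sc N a \<Longrightarrow> w (-1) a b = 0"
  proof (rule ccontr)
    assume ne: "b \<noteq> sc N a" and nz: "w (-1) a b \<noteq> 0"
    then have d: "int N dvd (int a - int b + 1)" using T[of "-1"] by simp
    show False
    proof (cases "int a - int b + 1 = int N")
      case True
      then have "b = 0" "a = N - 1" using a b by auto
      then show False using ne a by (auto simp: sc_def)
    next
      case False
      then have "int a - int b + 1 = 0" using a b d by (intro dvd_small) auto
      then show False using ne b by (auto simp: sc_def)
    qed
  qed
qed

lemma tw_interp: "in_gg N X \<Longrightarrow> tw N X"
  unfolding tw_def in_gg_def cmp_def
  using in_g_tw by auto


lemma TT0_eq:
  assumes X: "in_gg N X"
  shows "TT N u v X 0 = (\<lambda>p i j. if p = 0 \<and> i = j \<and> i < N then TT N u v X 0 0 i i else 0)"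
proof (intro ext)
  fix p i j
  interpret tw N X by (rule tw_interp[OF X])
  have z: "zo N (TT N u v X 0)" using X
    by (intro zo_TT) (auto simp: in_gg_def in_g_def zo_def)
  show "TT N u v X 0 p i j = (if p = 0 \<and> i = j \<and> i < N then TT N u v X 0 0 i i else 0)"
  proof (cases "i < N \<and> j < N")
    case False
    then show ?thesis using z by (auto simp: zo_def)
  next
    case True
    then have a: "i < N" and b: "j < N" by auto
    consider "2 \<le> p" | "p = 1" | "p = 0" | "p \<le> -1" by linarith
    then show ?thesis
    proof cases
      case 1 then show ?thesis using T0_big[OF a b] by simp
    next
      case 2 then show ?thesis using T0_1[OF a b] by simp
    next
      case 3 then show ?thesis using T0_0[OF a b] a b by auto
    next
      case 4 then show ?thesis using T0_neg[OF a b] by simp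
    qed
  qed
qed

lemma TT1_eq:
  assumes X: "in_gg N X"
  shows "TT N u v X 1 = (\<lambda>p i j. if p = -1 \<and> i < N \<and> j < N \<and> j = (i + 1) mod N then TT N u v X 1 (-1) i (sc N i) else 0)"
proof (intro ext)
  fix p i j
  interpret tw N X by (rule tw_interp[OF X])
  have z: "zo N (TT N u v X 1)" using X
    by (intro zo_TT) (auto simp: in_gg_def in_g_def zo_def)
  show "TT N u v X 1 p i j = (if p = -1 \<and> i < N \<and> j < N \<and> j = (i + 1) mod N then TT N u v X 1 (-1) i (sc N i) else 0)"
  proof (cases "i < N \<and> j < N")
    case False
    then show ?thesis using z by (auto simp: zo_def)
  next
    case True
    then have a: "i < N" and b: "j < N" by auto
    have m: "(i + 1) mod N = sc N i" using sc_mod[OF a] .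
    consider "1 \<le> p" | "p = 0" | "p = -1" | "p \<le> -2" by linarith
    then show ?thesis
    proof cases
      case 1 then show ?thesis using T1_big[OF a b] by simp
    next
      case 2 then show ?thesis using T1_0[OF a b] by simp
    next
      case 3 then show ?thesis using T1_m1[OF a b] m a b by auto
    next
      case 4 then show ?thesis using T1_neg[OF a b] by simp
    qed
  qed
qed

lemma mod_p1: "j < N \<Longrightarrow> (int ((j + 1) mod N) - int j) mod int N = 1 mod int N"
proof -
  assume j: "j < N"
  have "int ((j + 1) mod N) = (int j + 1) mod int N" by (simp add: of_nat_mod add.commute)
  then have "(int ((j + 1) mod N) - int j) mod int N = ((int j + 1) mod int N - int j) mod int N" by simp
  also have "\<dots> = (int j + 1 - int j) mod int N" by (rule mod_diff_left_eq)
  finally show ?thesis by simp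
qed

lemma mod_m1: "i < N \<Longrightarrow> (int i - int ((i + 1) mod N)) mod int N = (-1) mod int N"
proof -
  assume j: "i < N"
  have "int ((i + 1) mod N) = (int i + 1) mod int N" by (simp add: of_nat_mod add.commute)
  then have "(int i - int ((i + 1) mod N)) mod int N = (int i - (int i + 1) mod int N) mod int N" by simp
  also have "\<dots> = (int i - (int i + 1)) mod int N" by (rule mod_diff_right_eq)
  finally show ?thesis by simp
qed

lemma mod_p1': "j < N \<Longrightarrow> (int (sc N j) - int j) mod int N = 1 mod int N"
  using mod_p1 sc_mod by metis
lemma mod_m1': "i < N \<Longrightarrow> (int i - int (sc N i)) mod int N = (-1) mod int N"
  using mod_m1 sc_mod by metis

lemma Umat_in_g: "in_g N (Umat N u)"
  unfolding in_g_def
proof (intro conjI)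
  show "\<forall>p i j. (N \<le> i \<or> N \<le> j) \<longrightarrow> Umat N u p i j = 0" by (auto simp: Umat_def)
  show "\<exists>p0. \<forall>p i j. p0 < p \<longrightarrow> Umat N u p i j = 0" by (rule exI[of _ 1]) (auto simp: Umat_def)
  show "\<forall>p i j. Umat N u p i j \<noteq> 0 \<longrightarrow> (int i - int j) mod int N = p mod int N"
    by (auto simp: Umat_def mod_p1 mod_p1' split: if_splits)
qed

lemma Vmat_in_g: "in_g N (Vmat N u)"
  unfolding in_g_def
proof (intro conjI)
  show "\<forall>p i j. (N \<le> i \<or> N \<le> j) \<longrightarrow> Vmat N u p i j = 0" by (auto simp: Vmat_def)
  show "\<exists>p0. \<forall>p i j. p0 < p \<longrightarrow> Vmat N u p i j = 0" by (rule exI[of _ 0]) (auto simp: Vmat_def)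
  show "\<forall>p i j. Vmat N u p i j \<noteq> 0 \<longrightarrow> (int i - int j) mod int N = p mod int N"
    by (auto simp: Vmat_def mod_m1 mod_m1' split: if_splits)
qed

definition Tv :: "nat \<Rightarrow> (nat \<Rightarrow> real) \<Rightarrow> (nat \<Rightarrow> real) \<Rightarrow> loop \<times> loop" where
  "Tv N du dv = ((\<lambda>p i j. if p = 0 \<and> i = j \<and> i < N then du i else 0),
                 (\<lambda>p i j. if p = -1 \<and> i < N \<and> j < N \<and> j = (i + 1) mod N then dv i else 0))"

lemma Tv_in_gg: "in_gg N (Tv N du dv)"
  unfolding in_gg_def Tv_def in_g_def
  by (auto simp: mod_m1 mod_m1' intro: exI[of _ 0])

lemma Dlin: "((\<lambda>t::real. c + (if P then a + t * b else 0)) has_real_derivative (if P then b else 0)) (at 0)"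
  by (cases P) (auto intro!: derivative_eq_intros)

lemma Tv_tangent: "tangent_vec (UV_set N) (Umat N u, Vmat N v) (Tv N du dv)"
  unfolding tangent_vec_def
proof (intro exI conjI allI)
  let ?c = "\<lambda>t::real. (Umat N (\<lambda>i. u i + t * du i), Vmat N (\<lambda>i. v i + t * dv i))"
  show "(0::real) < 1" by simp
  show "?c 0 = (Umat N u, Vmat N v)" by simp
  show "\<bar>t\<bar> < 1 \<longrightarrow> ?c t \<in> UV_set N" for t by (auto simp: UV_set_def)
  fix k p i j
  show "((\<lambda>t. cmp (?c t) k p i j) has_real_derivative cmp (Tv N du dv) k p i j) (at 0)"
  proof (cases "k = 0")
    case True
    have e1: "(\<lambda>t. cmp (?c t) k p i j) = (\<lambda>t. (if p = 1 \<and> i < N \<and> j < N \<and> i = (j + 1) mod N then 1 else 0) + (if p = 0 \<and> i = j \<and> i < N then u i + t * du i else 0))"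
      by (simp add: True cmp_def Umat_def)
    have e2: "cmp (Tv N du dv) k p i j = (if p = 0 \<and> i = j \<and> i < N then du i else 0)"
      by (simp add: True cmp_def Tv_def)
    show ?thesis unfolding e1 e2 by (rule Dlin)
  next
    case False
    have e1: "(\<lambda>t. cmp (?c t) k p i j) = (\<lambda>t. (if p = 0 \<and> i = j \<and> i < N then 1 else 0) + (if p = -1 \<and> i < N \<and> j < N \<and> j = (i + 1) mod N then v i + t * dv i else 0))"
      by (simp add: False cmp_def Vmat_def)
    have e2: "cmp (Tv N du dv) k p i j = (if p = -1 \<and> i < N \<and> j < N \<and> j = (i + 1) mod N then dv i else 0)"
      by (simp add: False cmp_def Tv_def)
    show ?thesis unfolding e1 e2 by (rule Dlin)
  qed
qed

theorem proposition10:
  fixes N :: nat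
  assumes "2 \<le> N"
  shows "poisson_submanifold N (boldA N) (boldB N) (boldC N) (boldD N) (UV_set N)"
  unfolding poisson_submanifold_def
proof (intro conjI ballI allI impI)
  show "UV_set N \<subseteq> {x. in_gg N x}"
    by (auto simp: UV_set_def in_gg_def Umat_in_g Vmat_in_g)
  fix L X assume L: "L \<in> UV_set N" and X: "in_gg N X"
  obtain u v where Ld: "L = (Umat N u, Vmat N v)" using L by (auto simp: UV_set_def)
  define T where "T = Tv N (\<lambda>i. TT N u v X 0 0 i i) (\<lambda>i. TT N u v X 1 (-1) i (sc N i))"
  have "cmp T 0 = (\<lambda>p i j. if p = 0 \<and> i = j \<and> i < N then TT N u v X 0 0 i i else 0)"
    by (simp add: T_def Tv_def cmp_def)
  also have "\<dots> = TT N u v X 0" by (rule TT0_eq[OF X, symmetric])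
  finally have c0: "cmp T 0 = TT N u v X 0" .
  have "cmp T 1 = (\<lambda>p i j. if p = -1 \<and> i < N \<and> j < N \<and> j = (i + 1) mod N then TT N u v X 1 (-1) i (sc N i) else 0)"
    by (simp only: T_def Tv_def cmp_def one_neq_zero if_False snd_conv)
  also have "\<dots> = TT N u v X 1" by (rule TT1_eq[OF X, symmetric])
  finally have c1: "cmp T 1 = TT N u v X 1" .
  have "is_hamvf N (boldA N) (boldB N) (boldC N) (boldD N) L X T"
    unfolding is_hamvf_def
  proof (intro conjI allI impI)
    show "in_gg N T" by (simp add: T_def Tv_in_gg)
    fix Y assume Y: "in_gg N Y"
    show "PB N (boldA N) (boldB N) (boldC N) (boldD N) L X Y = ggpair N T Y"
      unfolding Ld PB_eq[OF X Y] ggpair_def sum2 c0 c1 ..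
  qed
  moreover have "tangent_vec (UV_set N) L T"
    unfolding Ld T_def by (rule Tv_tangent)
  ultimately show "\<exists>T. is_hamvf N (boldA N) (boldB N) (boldC N) (boldD N) L X T \<and> tangent_vec (UV_set N) L T"
    by blast
qed

end
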